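(* Let $\mathcal{H}$ be a real Hilbert space, $A_i:\mathcal{H}\rightrightarrows\mathcal{H}$ and $B_i:\mathcal{H}\to\mathcal{H}$ operators for $i=1,\dots,N$, $W$ a mixing matrix, $\gamma_1,\dots,\gamma_N>0$, $\Gamma=\mathrm{diag}(\gamma_1,\dots,\gamma_N)$, $K=((I-W)/2)^{1/2}\succeq 0$, $c>\|\Gamma K^2\Gamma\|$, and $M=(cI-K\Gamma^2K)^{1/2}\succ0$. Define $A(\mathbf{x})=A_1(x_1)\times\dots\times A_N(x_N)$, $B(\mathbf{x})=(B_1(x_1),\dots,B_N(x_N))$ on $\mathcal{H}^N$, and define $\widetilde A,\widetilde C:\mathcal{H}^N\times\mathcal{H}^N\rightrightarrows\mathcal{H}^N\times\mathcal{H}^N$ and $\widetilde B:\mathcal{H}^N\times\mathcal{H}^N\to\mathcal{H}^N\times\mathcal{H}^N$ by $\widetilde A(\mathbf{z},\tilde{\mathbf{z}})=\big(\Gamma A(\Gamma\mathbf{z}),N_{\{0\}}(\tilde{\mathbf{z}})\big)$, $\widetilde B(\mathbf{z},\tilde{\mathbf{z}})=(\Gamma B(\Gamma\mathbf{z}),0)$, $\widetilde C(\mathbf{z},\tilde{\mathbf{z}})=\big(\Gamma K N_{\{0\}}(K\Gamma\mathbf{z}+M\tilde{\mathbf{z}}),\,M N_{\{0\}}(K\Gamma\mathbf{z}+M\tilde{\mathbf{z}})\big)$. Then: (i) $(\mathbf{a},\tilde{\mathbf{a}})\in\mathcal{H}^N\times\mathcal{H}^N$ satisfies $0\in(\widetilde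 A+\widetilde B+\widetilde C)(\mathbf{a},\tilde{\mathbf{a}})$ if and only if $\mathbf{a}=\Gamma^{-1}(z,\dots,z)$ for some $z\in\mathcal{H}$ with $0\in\sum_{i=1}^N(A_i+B_i)(z)$; (ii) if $A_1,\dots,A_N$ are maximally monotone and each $B_i$ is monotone and $L_i$-Lipschitz continuous, then $\widetilde A$ and $\widetilde C$ are maximally monotone and $\widetilde B$ is monotone and $L$-Lipschitz continuous with $L=\max_i\{\gamma_i^2L_i\}$.
   Context: Real $N\times N$ matrices act on $\mathcal{H}^N$ via Kronecker product with the identity of $\mathcal{H}$; square roots and definiteness refer to these (symmetric positive semidefinite) matrices. A mixing matrix for a connected graph $(\{1,\dots,N\},\mathcal{E})$ is $W=(w_{ij})\in\mathbb{R}^{N\times N}$ with $w_{ij}=0$ if $i\ne j$ and $(i,j)\notin\mathcal{E}$, $W=W^\top$, $\ker(I-W)=\mathbb{R}\mathbf{1}$, and $-I\prec W\preceq I$. $N_{\{0\}}$ denotes the normal cone of $\{0\}\subset\mathcal{H}^N$: $N_{\{0\}}(0)=\mathcal{H}^N$, $N_{\{0\}}(\mathbf{w})=\varnothing$ for $\mathbf{w}\ne0$. *)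

theory Defs
  imports "HOL-Analysis.Analysis"
begin

text \<open>A real N x N matrix acting on H^N via the Kronecker product with the identity of H.\<close>
definition kron_act :: "real^'n^'n \<Rightarrow> 'a::real_vector^'n \<Rightarrow> 'a^'n" where
  "kron_act P x = (\<chi> i. \<Sum>j\<in>UNIV. (P$i$j) *\<^sub>R (x$j))"

definition diag_mat :: "('n::finite \<Rightarrow> real) \<Rightarrow> real^'n^'n" where
  "diag_mat g = (\<chi> i j. if i = j then g i else 0)"

definition sym_mat :: "real^'n^'n \<Rightarrow> bool" where
  "sym_mat P \<longleftrightarrow> transpose P = P"

text \<open>Positive semidefinite / positive definite (for symmetric matrices).\<close>
definition psd_mat :: "real^'n^'n \<Rightarrow> bool" where
  "psd_mat P \<longleftrightarrow> sym_mat P \<and> (\<forall>x. 0 \<le> x \<bullet> (P *v x))"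

definition pd_mat :: "real^'n^'n \<Rightarrow> bool" where
  "pd_mat P \<longleftrightarrow> sym_mat P \<and> (\<forall>x. x \<noteq> 0 \<longrightarrow> 0 < x \<bullet> (P *v x))"

text \<open>Connected undirected graph on the finite vertex type 'n.\<close>
definition connected_graph :: "('n \<times> 'n) set \<Rightarrow> bool" where
  "connected_graph E \<longleftrightarrow> (\<forall>i j. (i, j) \<in> (E \<union> E\<inverse>)\<^sup>*)"

definition mixing_matrix :: "('n::finite \<times> 'n) set \<Rightarrow> real^'n^'n \<Rightarrow> bool" where
  "mixing_matrix E W \<longleftrightarrow>
     (\<forall>i j. i \<noteq> j \<and> (i, j) \<notin> E \<longrightarrow> W$i$j = 0) \<and>
     sym_mat W \<and>
     {x. (mat 1 - W) *v x = 0} = {x. \<exists>t::real. x = t *\<^sub>R vec 1} \<and>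
     pd_mat (W + mat 1) \<and> psd_mat (mat 1 - W)"

text \<open>Normal cone of {0}.\<close>
definition normal_cone_zero :: "'b::zero \<Rightarrow> 'b set" where
  "normal_cone_zero w = (if w = 0 then UNIV else {})"

text \<open>Monotone / maximally monotone set-valued operators, monotone single-valued operators.\<close>
definition monotone_op :: "('b::real_inner \<Rightarrow> 'b set) \<Rightarrow> bool" where
  "monotone_op T \<longleftrightarrow> (\<forall>x y u v. u \<in> T x \<longrightarrow> v \<in> T y \<longrightarrow> 0 \<le> (x - y) \<bullet> (u - v))"

definition max_monotone_op :: "('b::real_inner \<Rightarrow> 'b set) \<Rightarrow> bool" where
  "max_monotone_op T \<longleftrightarrow> monotone_op T \<and>
     (\<forall>x u. (\<forall>y v. v \<in> T y \<longrightarrow> 0 \<le> (x - y) \<bullet> (u - v)) \<longrightarrow> u \<in> T x)"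

definition monotone_fun :: "('b::real_inner \<Rightarrow> 'b) \<Rightarrow> bool" where
  "monotone_fun F \<longleftrightarrow> (\<forall>x y. 0 \<le> (x - y) \<bullet> (F x - F y))"

text \<open>Product operators A and B on H^N.\<close>
definition prod_op :: "('n::finite \<Rightarrow> 'a \<Rightarrow> 'a set) \<Rightarrow> 'a^'n \<Rightarrow> ('a^'n) set" where
  "prod_op A x = {y. \<forall>i. y$i \<in> A i (x$i)}"

definition prod_fun :: "('n::finite \<Rightarrow> 'a \<Rightarrow> 'a) \<Rightarrow> 'a^'n \<Rightarrow> 'a^'n" where
  "prod_fun B x = (\<chi> i. B i (x$i))"

text \<open>The operators tilde A, tilde B, tilde C on H^N x H^N.\<close>
definition tA :: "('n::finite \<Rightarrow> 'a::real_vector \<Rightarrow> 'a set) \<Rightarrow> real^'n^'n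
                   \<Rightarrow> ('a^'n) \<times> ('a^'n) \<Rightarrow> (('a^'n) \<times> ('a^'n)) set" where
  "tA A G p = (kron_act G ` prod_op A (kron_act G (fst p))) \<times> normal_cone_zero (snd p)"

definition tB :: "('n::finite \<Rightarrow> 'a::real_vector \<Rightarrow> 'a) \<Rightarrow> real^'n^'n
                   \<Rightarrow> ('a^'n) \<times> ('a^'n) \<Rightarrow> ('a^'n) \<times> ('a^'n)" where
  "tB B G p = (kron_act G (prod_fun B (kron_act G (fst p))), 0)"

definition tC :: "real^'n^'n \<Rightarrow> real^'n^'n \<Rightarrow> real^'n^'n
                   \<Rightarrow> ('a::real_vector^'n::finite) \<times> ('a^'n) \<Rightarrow> (('a^'n) \<times> ('a^'n)) set" where
  "tC G K M p = (\<lambda>v. (kron_act (G ** K) v, kron_act M v)) `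
       normal_cone_zero (kron_act (K ** G) (fst p) + kron_act M (snd p))"

text \<open>Sum of two set-valued operators and a single-valued one.\<close>
definition sum_op3 :: "('b \<Rightarrow> 'b set) \<Rightarrow> ('b \<Rightarrow> 'b) \<Rightarrow> ('b \<Rightarrow> 'b set) \<Rightarrow> 'b \<Rightarrow> ('b::plus) set" where
  "sum_op3 T F S x = {u + F x + w | u w. u \<in> T x \<and> w \<in> S x}"

end

theory Submission
  imports Defs
begin


lemma kron_nth: "kron_act P x $ i = (\<Sum>j\<in>UNIV. (P$i$j) *\<^sub>R (x$j))"
  by (simp add: kron_act_def)

lemma kron_add: "kron_act P (x + y) = kron_act P x + kron_act P y"
  by (simp add: kron_act_def vec_eq_iff scaleR_add_right sum.distrib)

lemma kron_scaleR: "kron_act P (r *\<^sub>R x) = r *\<^sub>R kron_act P x"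
  by (simp add: kron_act_def vec_eq_iff scaleR_sum_right mult.commute)

lemma kron_minus: "kron_act P (- x) = - kron_act P x"
  by (simp add: kron_act_def vec_eq_iff sum_negf)

lemma kron_diff: "kron_act P (x - y) = kron_act P x - kron_act P y"
  by (simp add: kron_act_def vec_eq_iff scaleR_diff_right sum_subtractf)

lemma kron_zero: "kron_act P 0 = 0"
  by (simp add: kron_act_def vec_eq_iff)

lemma kron_mult_aux:
  "(\<Sum>j\<in>UNIV. (\<Sum>k\<in>UNIV. P$i$k * Q$k$j) *\<^sub>R x$j) =
      (\<Sum>k\<in>UNIV. P$i$k *\<^sub>R (\<Sum>j\<in>UNIV. Q$k$j *\<^sub>R (x$j :: 'a::real_vector)))"
proof -
    have "(\<Sum>j\<in>UNIV. (\<Sum>k\<in>UNIV. P$i$k * Q$k$j) *\<^sub>R x$j) =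
      (\<Sum>j\<in>UNIV. \<Sum>k\<in>UNIV. (P$i$k * Q$k$j) *\<^sub>R x$j)"
      by (simp only: scaleR_sum_left)
    also have "\<dots> = (\<Sum>k\<in>UNIV. \<Sum>j\<in>UNIV. (P$i$k * Q$k$j) *\<^sub>R x$j)"
      by (rule sum.swap)
    also have "\<dots> = (\<Sum>k\<in>UNIV. P$i$k *\<^sub>R (\<Sum>j\<in>UNIV. Q$k$j *\<^sub>R x$j))"
      by (simp only: scaleR_sum_right scaleR_scaleR)
    finally show ?thesis .
qed

lemma kron_mult: "kron_act (P ** Q) x = kron_act P (kron_act Q x)"
  unfolding kron_act_def matrix_matrix_mult_def vec_eq_iff
  by (simp only: vec_lambda_beta kron_mult_aux) simp

lemma kron_mat1:
  fixes x :: "'a::real_vector^'n::finite"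
  shows "kron_act (mat 1 :: real^'n^'n) x = x"
proof -
  have "\<And>i. (\<Sum>j\<in>UNIV. (mat 1 :: real^'n^'n)$i$j *\<^sub>R x$j) = x$i"
    by (simp add: mat_def if_distrib[of "\<lambda>t. t *\<^sub>R _"] sum.delta cong: if_cong)
  then show ?thesis by (simp add: kron_act_def vec_eq_iff)
qed

lemma kron_matdiff: "kron_act (P - Q) x = kron_act P x - kron_act Q x"
  by (simp add: kron_act_def vec_eq_iff scaleR_diff_left sum_subtractf)

lemma kron_adj:
  fixes x y :: "'a::real_inner^'n::finite"
  shows "kron_act P x \<bullet> y = x \<bullet> kron_act (transpose P) y"
proof -
  have "kron_act P x \<bullet> y = (\<Sum>i\<in>UNIV. \<Sum>j\<in>UNIV. P$i$j * (x$j \<bullet> y$i))"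
    by (simp add: inner_vec_def kron_act_def inner_sum_left)
  also have "\<dots> = (\<Sum>j\<in>UNIV. \<Sum>i\<in>UNIV. P$i$j * (x$j \<bullet> y$i))"
    by (rule sum.swap)
  also have "\<dots> = (\<Sum>j\<in>UNIV. x$j \<bullet> (\<Sum>i\<in>UNIV. P$i$j *\<^sub>R y$i))"
    by (simp add: inner_sum_right)
  also have "\<dots> = x \<bullet> kron_act (transpose P) y"
    unfolding inner_vec_def kron_act_def transpose_def by simp
  finally show ?thesis .
qed

lemma kron_diag: "kron_act (diag_mat g) x = (\<chi> i. g i *\<^sub>R x$i)"
proof -
  have "\<And>i. (\<Sum>j\<in>UNIV. (diag_mat g)$i$j *\<^sub>R x$j) = g i *\<^sub>R x$i"
    by (simp add: diag_mat_def if_distrib[of "\<lambda>t. t *\<^sub>R _"] sum.delta cong: if_cong)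
  then show ?thesis by (simp add: kron_act_def vec_eq_iff)
qed

definition proj_h :: "'a::real_inner \<Rightarrow> 'a^'n \<Rightarrow> real^'n" where
  "proj_h h x = (\<chi> i. x$i \<bullet> h)"

lemma proj_kron: "proj_h h (kron_act P x) = P *v proj_h h x"
  by (simp add: proj_h_def kron_act_def vec_eq_iff matrix_vector_mult_def inner_sum_left)

lemma transpose_diag: "transpose (diag_mat g) = diag_mat g"
  by (simp add: transpose_def diag_mat_def vec_eq_iff)



lemma mv_scaleR: "(c *\<^sub>R A) *v x = c *\<^sub>R (A *v (x::real^'n))"
  for A :: "real^'n^'m"
  by (simp add: matrix_vector_mult_def vec_eq_iff sum_distrib_left mult.assoc)

lemma mv_adj: "(A *v x) \<bullet> y = x \<bullet> (transpose A *v (y::real^'n))"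
  for A :: "real^'n^'n"
  by (metis dot_lmul_matrix vector_transpose_matrix)

lemma one_inner1: "(1::real^'n) \<bullet> (r::real^'n) = sum (($) r) UNIV"
  by (simp add: inner_vec_def)

lemma one_inner: "vec 1 \<bullet> (r::real^'n) = sum (($) r) UNIV"
  by (simp add: inner_vec_def)

lemma K1:
  fixes K W :: "real^'n^'n"
  assumes "transpose K = K" "K ** K = (1/2) *\<^sub>R (mat 1 - W)" "(mat 1 - W) *v vec 1 = 0"
  shows "K *v vec 1 = 0"
proof -
  have "(K *v vec 1) \<bullet> (K *v vec 1) = vec 1 \<bullet> ((K ** K) *v vec 1)"
    by (metis mv_adj assms(1) matrix_vector_mul_assoc)
  also have "\<dots> = 0" using assms(2,3) by (simp add: mv_scaleR)
  finally show ?thesis by simp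
qed

lemma Kker:
  fixes K W :: "real^'n^'n"
  assumes "K ** K = (1/2) *\<^sub>R (mat 1 - W)"
    "{x. (mat 1 - W) *v x = 0} = {x. \<exists>t::real. x = t *\<^sub>R vec 1}"
    "K *v x = 0"
  shows "\<exists>t. x = t *\<^sub>R vec 1"
proof -
  have "(K ** K) *v x = 0" by (metis assms(3) matrix_vector_mul_assoc matrix_vector_mult_0_right)
  then have "(mat 1 - W) *v x = 0" using assms(1) by (simp add: mv_scaleR)
  then show ?thesis using assms(2) by blast
qed

lemma Ksurj:
  fixes K W :: "real^'n^'n"
  assumes "transpose K = K" "K ** K = (1/2) *\<^sub>R (mat 1 - W)"
    "{x. (mat 1 - W) *v x = 0} = {x. \<exists>t::real. x = t *\<^sub>R vec 1}"
  shows "\<exists>P::real^'n^'n. \<forall>r. vec 1 \<bullet> r = 0 \<longrightarrow> K *v (P *v r) = r"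
proof -
  define N where "N = real CARD('n)"
  have Npos: "N > 0" unfolding N_def by simp
  define J :: "real^'n^'n" where "J = (\<chi> i j. 1)"
  have Jv: "J *v x = (vec 1 \<bullet> x) *\<^sub>R vec 1" for x
    by (simp add: J_def matrix_vector_mult_def vec_eq_iff one_inner one_inner1)
  have ker1: "(mat 1 - W) *v vec 1 = 0" using assms(3) by (metis (mono_tags, lifting) mem_Collect_eq scaleR_one)
  have K1': "K *v vec 1 = 0" using K1[OF assms(1,2) ker1] .
  define Q where "Q = K ** K + (1/N) *\<^sub>R J"
  have Qv: "Q *v x = K *v (K *v x) + ((1/N) * (vec 1 \<bullet> x)) *\<^sub>R vec 1" for x
    by (simp add: Q_def matrix_vector_mult_add_rdistrib mv_scaleR Jv matrix_vector_mul_assoc)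
  have inj: "x = 0" if "Q *v x = 0" for x
  proof -
    have "0 = x \<bullet> (Q *v x)" using that by simp
    also have "\<dots> = (K *v x) \<bullet> (K *v x) + (1/N) * (vec 1 \<bullet> x)^2"
      by (simp add: Qv inner_add_right mv_adj assms(1) power2_eq_square inner_commute)
    finally have e: "(K *v x) \<bullet> (K *v x) + (1/N) * (vec 1 \<bullet> x)^2 = 0" by simp
    have "(K *v x) \<bullet> (K *v x) \<ge> 0" by simp
    moreover have "(1/N) * (vec 1 \<bullet> x)^2 \<ge> 0" using Npos by simp
    ultimately have a: "(K *v x) \<bullet> (K *v x) = 0" and b: "(1/N) * (vec 1 \<bullet> x)^2 = 0"
      using e by linarith+
    from a have "K *v x = 0" by simp
    then obtain t where t: "x = t *\<^sub>R vec 1" using Kker[OF assms(2,3)] by blast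
    from b Npos have "vec 1 \<bullet> x = 0" by simp
    then have "t * N = 0" using t by (simp add: one_inner one_inner1 N_def)
    then have "t = 0" using Npos by simp
    then show ?thesis using t by simp
  qed
  then obtain B where "B ** Q = mat 1" using matrix_left_invertible_ker by blast
  then have QB: "Q ** B = mat 1" using matrix_left_right_inverse by blast
  show ?thesis
  proof (intro exI allI impI)
    fix r :: "real^'n" assume r: "vec 1 \<bullet> r = 0"
    define w where "w = B *v r"
    have "Q *v w = r" by (simp add: w_def matrix_vector_mul_assoc QB)
    then have eq: "K *v (K *v w) + ((1/N) * (vec 1 \<bullet> w)) *\<^sub>R vec 1 = r" by (simp add: Qv)
    have "vec 1 \<bullet> (K *v (K *v w)) = 0"
      by (metis mv_adj assms(1) K1' inner_zero_left)
    moreover have "vec 1 \<bullet> (vec 1 :: real^'n) = N" by (simp add: one_inner one_inner1 N_def)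
    ultimately have "vec 1 \<bullet> w = 0"
      using arg_cong[OF eq, of "\<lambda>z. vec 1 \<bullet> z"] r Npos by (simp add: inner_add_right)
    then have "K *v (K *v w) = r" using eq by simp
    then show "K *v ((K ** B) *v r) = r" by (simp add: w_def matrix_vector_mul_assoc)
  qed
qed



lemma proj_eq:
  fixes x y :: "'a::real_inner^'n::finite"
  assumes "\<And>h. proj_h h x = proj_h h y"
  shows "x = y"
proof -
  have "x$i = y$i" for i
  proof -
    have "x$i \<bullet> (x$i - y$i) = y$i \<bullet> (x$i - y$i)"
      using assms[of "x$i - y$i"] by (simp add: proj_h_def vec_eq_iff)
    then have "(x$i - y$i) \<bullet> (x$i - y$i) = 0" by (simp add: inner_diff_left)
    then show ?thesis by simp
  qed
  then show ?thesis by (simp add: vec_eq_iff)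
qed

lemma proj_sum: "vec 1 \<bullet> proj_h h y = (\<Sum>i\<in>UNIV. y$i) \<bullet> h"
  by (simp add: one_inner one_inner1 proj_h_def inner_sum_left)

lemma proj_const: "proj_h h ((\<chi> i. z)::'a::real_inner^'n) = (z \<bullet> h) *\<^sub>R vec 1"
  by (simp add: proj_h_def vec_eq_iff)

lemma kron_K_const:
  fixes K :: "real^'n::finite^'n"
  assumes "K *v vec 1 = 0"
  shows "kron_act K ((\<chi> i. z)::'a::real_inner^'n) = 0"
proof (rule proj_eq)
  fix h
  have "K *v ((z \<bullet> h) *\<^sub>R vec 1) = (z \<bullet> h) *\<^sub>R (K *v vec 1)"
    by (simp add: matrix_vector_mult_def vec_eq_iff sum_distrib_left algebra_simps)
  have "proj_h h (kron_act K ((\<chi> i. z)::'a^'n)) = K *v proj_h h ((\<chi> i. z)::'a^'n)"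
    by (rule proj_kron)
  also have "\<dots> = K *v ((z \<bullet> h) *\<^sub>R vec 1)" by (simp only: proj_const)
  also have "\<dots> = 0" using assms \<open>K *v ((z \<bullet> h) *\<^sub>R vec 1) = _\<close> by simp
  also have "0 = proj_h h (0::'a^'n)" by (simp add: proj_h_def vec_eq_iff)
  finally show "proj_h h (kron_act K ((\<chi> i. z)::'a^'n)) = proj_h h 0" .
qed

lemma kron_K_ker:
  fixes K W :: "real^'n::finite^'n" and x :: "'a::real_inner^'n"
  assumes "K ** K = (1/2) *\<^sub>R (mat 1 - W)"
    "{x. (mat 1 - W) *v x = 0} = {x. \<exists>t::real. x = t *\<^sub>R vec 1}"
    "kron_act K x = 0"
  shows "\<exists>z. x = (\<chi> i. z)"
proof -
  have eq: "x$i = x$j" for i j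
  proof -
    have "proj_h h x $ i = proj_h h x $ j" for h
    proof -
      have "K *v proj_h h x = 0"
        using assms(3) proj_kron[of h K x] by (simp add: proj_h_def vec_eq_iff)
      then obtain t where "proj_h h x = t *\<^sub>R vec 1" using Kker[OF assms(1,2)] by blast
      then show ?thesis by simp
    qed
    then have "x$i \<bullet> (x$i - x$j) = x$j \<bullet> (x$i - x$j)"
      by (simp add: proj_h_def)
    then have "(x$i - x$j) \<bullet> (x$i - x$j) = 0" by (simp add: inner_diff_left)
    then show ?thesis by simp
  qed
  show ?thesis
    by (rule exI[of _ "x$undefined"]) (simp add: vec_eq_iff eq)
qed

lemma kron_K_sum:
  fixes K :: "real^'n::finite^'n" and v :: "'a::real_inner^'n"
  assumes "K *v vec 1 = 0" "transpose K = K"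
  shows "(\<Sum>i\<in>UNIV. kron_act K v $ i) = 0"
proof -
  let ?s = "\<Sum>i\<in>UNIV. kron_act K v $ i"
  have "?s \<bullet> h = 0" for h
  proof -
    have "?s \<bullet> h = vec 1 \<bullet> (K *v proj_h h v)"
      by (simp add: proj_sum[symmetric] proj_kron)
    also have "\<dots> = (K *v vec 1) \<bullet> proj_h h v"
      by (metis mv_adj assms(2) inner_commute)
    finally show ?thesis using assms(1) by simp
  qed
  from this[of ?s] show ?thesis by simp
qed

lemma kron_K_surj:
  fixes K P :: "real^'n::finite^'n" and y :: "'a::real_inner^'n"
  assumes "\<forall>r. vec 1 \<bullet> r = 0 \<longrightarrow> K *v (P *v r) = r"
    "(\<Sum>i\<in>UNIV. y $ i) = 0"
  shows "kron_act K (kron_act P y) = y"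
proof (rule proj_eq)
  fix h
  have "vec 1 \<bullet> proj_h h y = 0" using assms(2) by (simp only: proj_sum) simp
  then show "proj_h h (kron_act K (kron_act P y)) = proj_h h y"
    using assms(1) by (simp add: proj_kron)
qed

lemma kron_G_inj:
  assumes "\<forall>i. 0 < g i" "kron_act (diag_mat g) x = 0"
  shows "x = 0"
  using assms by (auto simp: kron_diag vec_eq_iff) (metis less_irrefl)

lemma inner_vec_sum: "(x::'a::real_inner^'n) \<bullet> y = (\<Sum>i\<in>UNIV. x$i \<bullet> y$i)"
  by (simp add: inner_vec_def)



lemma part1:
  fixes A :: "'n::finite \<Rightarrow> 'a::real_inner \<Rightarrow> 'a set"
    and B :: "'n \<Rightarrow> 'a \<Rightarrow> 'a"
    and W K M :: "real^'n^'n"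
    and \<gamma> :: "'n \<Rightarrow> real"
  assumes gpos: "\<forall>i. 0 < \<gamma> i" and symK: "transpose K = K"
    and KK: "K ** K = (1/2) *\<^sub>R (mat 1 - W)"
    and kerW: "{x. (mat 1 - W) *v x = 0} = {x. \<exists>t::real. x = t *\<^sub>R vec 1}"
  shows "(0 \<in> sum_op3 (tA A (diag_mat \<gamma>)) (tB B (diag_mat \<gamma>))
                           (tC (diag_mat \<gamma>) K M) (a, a2))
        \<longleftrightarrow> a2 = 0 \<and>
            (\<exists>z. a = (\<chi> i. inverse (\<gamma> i) *\<^sub>R z) \<and>
                 (\<exists>y. (\<forall>i. y i \<in> A i z) \<and> (\<Sum>i\<in>UNIV. y i + B i z) = 0))"
proof -
  define G where "G = diag_mat \<gamma>"
  have ker1: "(mat 1 - W) *v vec 1 = 0" using kerW by (metis (mono_tags, lifting) mem_Collect_eq scaleR_one)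
  have K1': "K *v vec 1 = 0" using K1[OF symK KK ker1] .
  have Gconst: "kron_act G a = (\<chi> i. z) \<longleftrightarrow> a = (\<chi> i. inverse (\<gamma> i) *\<^sub>R z)" for a z
  proof -
    have "\<gamma> i *\<^sub>R a$i = z \<longleftrightarrow> a$i = inverse (\<gamma> i) *\<^sub>R z" for i
      using gpos[rule_format, of i] by (auto simp: field_simps)
    then show ?thesis by (simp add: G_def kron_diag vec_eq_iff)
  qed
  show ?thesis
  proof
    assume "0 \<in> sum_op3 (tA A (diag_mat \<gamma>)) (tB B (diag_mat \<gamma>)) (tC (diag_mat \<gamma>) K M) (a, a2)"
    then obtain u w where u: "u \<in> tA A G (a, a2)" and w: "w \<in> tC G K M (a, a2)"
      and e: "0 = u + tB B G (a, a2) + w"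
      unfolding sum_op3_def G_def by blast
    from u obtain q n where q: "q \<in> prod_op A (kron_act G a)" and un: "u = (kron_act G q, n)"
      and n: "n \<in> normal_cone_zero a2"
      unfolding tA_def by (cases u) auto
    have a2: "a2 = 0" using n by (simp add: normal_cone_zero_def split: if_splits)
    from w obtain v where wv: "w = (kron_act (G ** K) v, kron_act M v)"
      and nz: "v \<in> normal_cone_zero (kron_act (K ** G) a + kron_act M a2)"
      unfolding tC_def by auto
    have "kron_act K (kron_act G a) = 0"
      using nz a2 by (simp add: normal_cone_zero_def kron_mult kron_zero split: if_splits)
    then obtain z where z: "kron_act G a = (\<chi> i. z)" using kron_K_ker[OF KK kerW] by blast
    have "0 = kron_act G q + kron_act G (prod_fun B (kron_act G a)) + kron_act G (kron_act K v)"
      using arg_cong[OF e, of fst] by (simp add: un wv tB_def kron_mult)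
    then have "kron_act G (q + prod_fun B (kron_act G a) + kron_act K v) = 0"
      by (simp add: kron_add)
    then have e2: "q + prod_fun B (\<chi> i. z) + kron_act K v = 0"
      using kron_G_inj[OF gpos] z by (simp add: G_def)
    have ci: "q$i + B i z = - (kron_act K v $ i)" for i
      using arg_cong[OF e2, of "\<lambda>x. x$i"] by (simp add: prod_fun_def eq_neg_iff_add_eq_0 add.assoc)
    have "(\<Sum>i\<in>UNIV. q$i + B i z) = - (\<Sum>i\<in>UNIV. kron_act K v $ i)"
      by (simp add: ci sum_negf)
    also have "\<dots> = 0" using kron_K_sum[OF K1' symK] by simp
    finally have s: "(\<Sum>i\<in>UNIV. q$i + B i z) = 0" .
    have "\<forall>i. q$i \<in> A i z" using q z by (simp add: prod_op_def)
    then show "a2 = 0 \<and> (\<exists>z. a = (\<chi> i. inverse (\<gamma> i) *\<^sub>R z) \<and>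
                 (\<exists>y. (\<forall>i. y i \<in> A i z) \<and> (\<Sum>i\<in>UNIV. y i + B i z) = 0))"
      using a2 s z Gconst by blast
  next
    assume "a2 = 0 \<and> (\<exists>z. a = (\<chi> i. inverse (\<gamma> i) *\<^sub>R z) \<and>
                 (\<exists>y. (\<forall>i. y i \<in> A i z) \<and> (\<Sum>i\<in>UNIV. y i + B i z) = 0))"
    then obtain z y where a2: "a2 = 0" and a: "a = (\<chi> i. inverse (\<gamma> i) *\<^sub>R z)"
      and y: "\<forall>i. y i \<in> A i z" and s: "(\<Sum>i\<in>UNIV. y i + B i z) = 0" by blast
    have Ga: "kron_act G a = (\<chi> i. z)" using Gconst a by blast
    define r :: "'a^'n" where "r = (\<chi> i. - (y i + B i z))"
    have sr: "(\<Sum>i\<in>UNIV. r $ i) = 0" unfolding r_def by (simp only: vec_lambda_beta sum_negf s) simp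
    obtain P where P: "\<forall>r. vec 1 \<bullet> r = 0 \<longrightarrow> K *v (P *v r) = r"
      using Ksurj[OF symK KK kerW] by blast
    define v where "v = kron_act P r"
    have Kv: "kron_act K v = r" using kron_K_surj[OF P sr] by (simp add: v_def)
    define u where "u = (kron_act G (\<chi> i. y i), - kron_act M v)"
    define w where "w = (kron_act (G ** K) v, kron_act M v)"
    have uA: "u \<in> tA A G (a, a2)"
      using y by (auto simp: u_def tA_def Ga prod_op_def a2 normal_cone_zero_def)
    have "kron_act (K ** G) a + kron_act M a2 = 0"
      using a2 Ga kron_K_const[OF K1'] by (simp add: kron_mult kron_zero)
    then have wC: "w \<in> tC G K M (a, a2)"
      by (auto simp: w_def tC_def normal_cone_zero_def)
    have "(\<chi> i. y i) + prod_fun B (\<chi> i. z) + r = 0"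
      by (simp add: r_def prod_fun_def vec_eq_iff)
    then have "kron_act G (\<chi> i. y i) + kron_act G (prod_fun B (kron_act G a)) + kron_act G (kron_act K v) = 0"
      by (simp add: Ga Kv kron_add[symmetric] kron_zero)
    then have "fst (u + tB B G (a, a2) + w) = 0"
      by (simp add: u_def w_def tB_def kron_mult)
    moreover have "snd (u + tB B G (a, a2) + w) = 0"
      by (simp add: u_def w_def tB_def)
    ultimately have "0 = u + tB B G (a, a2) + w"
      by (metis prod.collapse zero_prod_def)
    then show "0 \<in> sum_op3 (tA A (diag_mat \<gamma>)) (tB B (diag_mat \<gamma>)) (tC (diag_mat \<gamma>) K M) (a, a2)"
      using uA wC unfolding sum_op3_def G_def by blast
  qed
qed



lemma mm_neg:
  assumes "max_monotone_op T" "u \<notin> T x"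
  shows "\<exists>z w. w \<in> T z \<and> (x - z) \<bullet> (u - w) < 0"
  using assms unfolding max_monotone_op_def by (meson not_le)

lemma mm_eps:
  assumes "max_monotone_op T" "0 < e"
  shows "\<exists>z w. w \<in> T z \<and> (x - z) \<bullet> (u - w) < e"
proof (cases "u \<in> T x")
  case True then show ?thesis using assms(2) by (intro exI[of _ x] exI[of _ u]) simp
next
  case False then show ?thesis using mm_neg[OF assms(1) False] assms(2) by force
qed

lemma lin_arg:
  fixes a c :: real
  assumes "\<forall>s. 0 \<le> c - s * a" "0 \<le> a"
  shows "a = 0"
proof (rule ccontr)
  assume "a \<noteq> 0"
  then have a: "a > 0" using assms(2) by simp
  have "0 \<le> c - ((\<bar>c\<bar> + 1) / a) * a" using assms(1) by blast
  also have "\<dots> = c - (\<bar>c\<bar> + 1)" using a by simp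
  finally show False by linarith
qed

lemma Gadj: "x \<bullet> kron_act (diag_mat g) y = kron_act (diag_mat g) x \<bullet> (y::'a::real_inner^'n::finite)"
  by (simp add: kron_adj transpose_diag)

lemma test_inner:
  fixes x p zz ww :: "'a::real_inner^'n::finite"
  assumes gpos: "\<forall>i. 0 < \<gamma> i"
  shows "(x - kron_act (diag_mat (\<lambda>i. inverse (\<gamma> i))) zz) \<bullet> (p - kron_act (diag_mat \<gamma>) ww)
     = (\<Sum>j\<in>UNIV. (kron_act (diag_mat \<gamma>) x $ j - zz$j) \<bullet> (kron_act (diag_mat (\<lambda>i. inverse (\<gamma> i))) p $ j - ww$j))"
proof -
  have "(x$j - inverse (\<gamma> j) *\<^sub>R zz$j) \<bullet> (p$j - \<gamma> j *\<^sub>R ww$j) =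
        (\<gamma> j *\<^sub>R x$j - zz$j) \<bullet> (inverse (\<gamma> j) *\<^sub>R p$j - ww$j)" for j
  proof -
    have g: "\<gamma> j \<noteq> 0" using gpos by (metis less_irrefl)
    have e1: "x$j - inverse (\<gamma> j) *\<^sub>R zz$j = inverse (\<gamma> j) *\<^sub>R (\<gamma> j *\<^sub>R x$j - zz$j)"
      using g by (simp add: scaleR_diff_right)
    have e2: "p$j - \<gamma> j *\<^sub>R ww$j = \<gamma> j *\<^sub>R (inverse (\<gamma> j) *\<^sub>R p$j - ww$j)"
      using g by (simp add: scaleR_diff_right)
    show ?thesis unfolding e1 e2 using g by simp
  qed
  then show ?thesis by (simp add: inner_vec_sum kron_diag)
qed

lemma Ginv1: "\<forall>i. 0 < \<gamma> i \<Longrightarrow> kron_act (diag_mat \<gamma>) (kron_act (diag_mat (\<lambda>i. inverse (\<gamma> i))) t) = t"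
  by (simp add: kron_diag vec_eq_iff) (metis less_irrefl right_inverse left_inverse scaleR_one)

lemma Ginv2: "\<forall>i. 0 < \<gamma> i \<Longrightarrow> kron_act (diag_mat (\<lambda>i. inverse (\<gamma> i))) (kron_act (diag_mat \<gamma>) t) = t"
  by (simp add: kron_diag vec_eq_iff) (metis less_irrefl right_inverse left_inverse scaleR_one)



lemma tA_mono:
  fixes A :: "'n::finite \<Rightarrow> 'a::real_inner \<Rightarrow> 'a set"
  assumes mA: "\<forall>i. monotone_op (A i)"
  shows "monotone_op (tA A (diag_mat \<gamma>))"
  unfolding monotone_op_def
proof (intro allI impI)
  fix X Y U V :: "('a^'n) \<times> ('a^'n)"
  assume U: "U \<in> tA A (diag_mat \<gamma>) X" and V: "V \<in> tA A (diag_mat \<gamma>) Y"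
  let ?G = "diag_mat \<gamma>"
  from U obtain q where q: "q \<in> prod_op A (kron_act ?G (fst X))" "fst U = kron_act ?G q"
    and x2: "snd X = 0" by (auto simp: tA_def normal_cone_zero_def split: if_splits)
  from V obtain q' where q': "q' \<in> prod_op A (kron_act ?G (fst Y))" "fst V = kron_act ?G q'"
    and y2: "snd Y = 0" by (auto simp: tA_def normal_cone_zero_def split: if_splits)
  have "(X - Y) \<bullet> (U - V) = (fst X - fst Y) \<bullet> (fst U - fst V)"
    using x2 y2 by (simp add: inner_prod_def)
  also have "\<dots> = (fst X - fst Y) \<bullet> kron_act ?G (q - q')" by (simp add: q q' kron_diff)
  also have "\<dots> = (kron_act ?G (fst X) - kron_act ?G (fst Y)) \<bullet> (q - q')"
    by (simp only: Gadj kron_diff[symmetric])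
  also have "\<dots> = (\<Sum>j\<in>UNIV. (kron_act ?G (fst X) $ j - kron_act ?G (fst Y) $ j) \<bullet> (q$j - q'$j))"
    by (simp add: inner_vec_sum)
  also have "\<dots> \<ge> 0"
    using q(1) q'(1) mA by (intro sum_nonneg) (simp add: prod_op_def monotone_op_def; blast)
  finally show "0 \<le> (X - Y) \<bullet> (U - V)" .
qed

lemma tA_max:
  fixes A :: "'n::finite \<Rightarrow> 'a::real_inner \<Rightarrow> 'a set"
  assumes gpos: "\<forall>i. 0 < \<gamma> i" and mA: "\<forall>i. max_monotone_op (A i)"
  shows "max_monotone_op (tA A (diag_mat \<gamma>))"
  unfolding max_monotone_op_def
proof (intro conjI allI impI)
  show "monotone_op (tA A (diag_mat \<gamma>))"
    using mA by (intro tA_mono) (simp add: max_monotone_op_def)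
next
  fix X U :: "('a^'n) \<times> ('a^'n)"
  assume H: "\<forall>Y V. V \<in> tA A (diag_mat \<gamma>) Y \<longrightarrow> 0 \<le> (X - Y) \<bullet> (U - V)"
  let ?G = "diag_mat \<gamma>"
  let ?Gi = "diag_mat (\<lambda>i. inverse (\<gamma> i))"
  obtain x x2 where X: "X = (x, x2)" by (cases X)
  obtain p p2 where U: "U = (p, p2)" by (cases U)
  define gx where "gx = kron_act ?G x"
  define u' where "u' = kron_act ?Gi p"
  have test: "0 \<le> (\<Sum>j\<in>UNIV. (gx $ j - zz$j) \<bullet> (u' $ j - ww$j)) + (x2 - y2) \<bullet> (p2 - n)"
    if "\<forall>j. ww$j \<in> A j (zz$j)" "n \<in> normal_cone_zero y2" for zz ww y2 n
  proof -
    have "(kron_act ?G ww, n) \<in> tA A ?G (kron_act ?Gi zz, y2)"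
      using that by (simp add: tA_def Ginv1[OF gpos] prod_op_def)
    then have "0 \<le> (X - (kron_act ?Gi zz, y2)) \<bullet> (U - (kron_act ?G ww, n))" using H by blast
    then show ?thesis
      by (simp add: X U test_inner[OF gpos] gx_def u'_def)
  qed
  have "\<forall>j. \<exists>zw. snd zw \<in> A j (fst zw)"
    using mm_eps[OF mA[rule_format] zero_less_one] by fastforce
  then obtain f where f: "\<forall>j. snd (f j) \<in> A j (fst (f j))" by metis
  define C where "C = (\<Sum>j\<in>UNIV. (gx $ j - fst (f j)) \<bullet> (u' $ j - snd (f j)))"
  have "\<forall>s. 0 \<le> C - s * (x2 \<bullet> x2)"
  proof
    fix s
    have "0 \<le> C + (x2 - 0) \<bullet> (p2 - (p2 + s *\<^sub>R x2))"
      using test[of "\<chi> j. snd (f j)" "\<chi> j. fst (f j)" "p2 + s *\<^sub>R x2" 0] f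
      by (simp add: C_def normal_cone_zero_def)
    then show "0 \<le> C - s * (x2 \<bullet> x2)" by simp
  qed
  then have "x2 \<bullet> x2 = 0" by (rule lin_arg) simp
  then have x2: "x2 = 0" by simp
  have comp: "u'$i \<in> A i (gx$i)" for i
  proof (rule ccontr)
    assume nin: "u'$i \<notin> A i (gx$i)"
    obtain zi wi where zw: "wi \<in> A i zi" and neg: "(gx$i - zi) \<bullet> (u'$i - wi) < 0"
      using mm_neg[OF mA[rule_format] nin] by blast
    define d where "d = - ((gx$i - zi) \<bullet> (u'$i - wi))"
    have d: "d > 0" using neg by (simp add: d_def)
    define N where "N = real CARD('n)"
    have Npos: "N \<ge> 1" unfolding N_def by simp
    have "\<forall>j. \<exists>zw. snd zw \<in> A j (fst zw) \<and> (gx$j - fst zw) \<bullet> (u'$j - snd zw) < d / N"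
      using mm_eps[OF mA[rule_format], of "d / N"] d Npos by fastforce
    then obtain g where g: "\<forall>j. snd (g j) \<in> A j (fst (g j)) \<and> (gx$j - fst (g j)) \<bullet> (u'$j - snd (g j)) < d / N"
      by metis
    define zz :: "'a^'n" where "zz = (\<chi> j. if j = i then zi else fst (g j))"
    define ww :: "'a^'n" where "ww = (\<chi> j. if j = i then wi else snd (g j))"
    define t where "t j = (gx $ j - zz$j) \<bullet> (u' $ j - ww$j)" for j
    have "0 \<le> (\<Sum>j\<in>UNIV. t j) + (x2 - 0) \<bullet> (p2 - p2)"
      using test[of ww zz p2 0] g zw unfolding t_def
      by (simp add: zz_def ww_def normal_cone_zero_def)
    then have s0: "0 \<le> (\<Sum>j\<in>UNIV. t j)" by simp
    have "(\<Sum>j\<in>UNIV. t j) = t i + (\<Sum>j\<in>UNIV - {i}. t j)"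
      by (simp add: sum.remove)
    also have "t i = - d" by (simp add: t_def d_def zz_def ww_def)
    also have "(\<Sum>j\<in>UNIV - {i}. t j) \<le> of_nat (card (UNIV - {i} :: 'n set)) * (d / N)"
      using g by (intro sum_bounded_above less_imp_le) (simp add: t_def zz_def ww_def)
    also have "of_nat (card (UNIV - {i} :: 'n set)) = N - 1"
      using Npos by (simp add: N_def card_Diff_singleton of_nat_diff)
    finally have "0 \<le> - d + (N - 1) * (d / N)" using s0 by linarith
    moreover have "(N - 1) * (d / N) < d"
      using d Npos by (simp add: field_simps)
    ultimately show False by linarith
  qed
  have "p = kron_act ?G u'" by (simp add: u'_def Ginv1[OF gpos])
  moreover have "u' \<in> prod_op A (kron_act ?G x)"
    using comp by (simp add: prod_op_def gx_def)
  ultimately show "U \<in> tA A (diag_mat \<gamma>) X"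
    by (simp add: X U x2 tA_def normal_cone_zero_def)
qed



lemma kron_adj2: "x \<bullet> kron_act Q v = kron_act (transpose Q) x \<bullet> (v::'a::real_inner^'n::finite)"
  by (metis kron_adj transpose_transpose inner_commute)

lemma Ladj:
  fixes K M :: "real^'n::finite^'n" and x x2 v :: "'a::real_inner^'n"
  assumes "transpose K = K" "transpose M = M"
  shows "x \<bullet> kron_act (diag_mat \<gamma> ** K) v + x2 \<bullet> kron_act M v
     = (kron_act (K ** diag_mat \<gamma>) x + kron_act M x2) \<bullet> v"
  by (simp add: kron_adj2 matrix_transpose_mul transpose_diag assms inner_add_left)

lemma tC_max:
  fixes K M Mi :: "real^'n::finite^'n"
  assumes symK: "transpose K = K" and symM: "transpose M = M"
    and Mi1: "M ** Mi = mat 1" and symMi: "transpose Mi = Mi"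
  shows "max_monotone_op (tC (diag_mat \<gamma>) K M :: ('a::real_inner^'n) \<times> ('a^'n) \<Rightarrow> _)"
  unfolding max_monotone_op_def
proof (intro conjI allI impI)
  let ?G = "diag_mat \<gamma>"
  let ?L = "\<lambda>x x2. kron_act (K ** ?G) x + kron_act M x2 :: 'a^'n"
  show "monotone_op (tC (diag_mat \<gamma>) K M :: ('a::real_inner^'n) \<times> ('a^'n) \<Rightarrow> _)"
    unfolding monotone_op_def
  proof (intro allI impI)
    fix X Y U V :: "('a^'n) \<times> ('a^'n)"
    assume U: "U \<in> tC ?G K M X" and V: "V \<in> tC ?G K M Y"
    obtain x x2 where X: "X = (x, x2)" by (cases X)
    obtain y y2 where Y: "Y = (y, y2)" by (cases Y)
    from U obtain v where v: "U = (kron_act (?G ** K) v, kron_act M v)" and Lx: "?L x x2 = 0"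
      by (auto simp: tC_def X normal_cone_zero_def split: if_splits)
    from V obtain v' where v': "V = (kron_act (?G ** K) v', kron_act M v')" and Ly: "?L y y2 = 0"
      by (auto simp: tC_def Y normal_cone_zero_def split: if_splits)
    have "(X - Y) \<bullet> (U - V) = (x - y) \<bullet> kron_act (?G ** K) (v - v') + (x2 - y2) \<bullet> kron_act M (v - v')"
      by (simp add: X Y v v' kron_diff)
    also have "\<dots> = ?L (x - y) (x2 - y2) \<bullet> (v - v')" by (rule Ladj[OF symK symM])
    also have "?L (x - y) (x2 - y2) = ?L x x2 - ?L y y2" by (simp add: kron_diff algebra_simps)
    finally show "0 \<le> (X - Y) \<bullet> (U - V)" using Lx Ly by simp
  qed
next
  let ?G = "diag_mat \<gamma>"
  let ?L = "\<lambda>x x2. kron_act (K ** ?G) x + kron_act M x2 :: 'a^'n"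
  fix X U :: "('a^'n) \<times> ('a^'n)"
  assume H: "\<forall>Y V. V \<in> tC ?G K M Y \<longrightarrow> 0 \<le> (X - Y) \<bullet> (U - V)"
  obtain x x2 where X: "X = (x, x2)" by (cases X)
  obtain p p2 where U: "U = (p, p2)" by (cases U)
  define l where "l = ?L x x2"
  have "\<forall>t. 0 \<le> (x \<bullet> p + x2 \<bullet> p2) - t * (l \<bullet> l)"
  proof
    fix t
    have "(kron_act (?G ** K) (t *\<^sub>R l), kron_act M (t *\<^sub>R l)) \<in> tC ?G K M (0, 0)"
      by (simp add: tC_def kron_zero normal_cone_zero_def)
    then have "0 \<le> (X - 0) \<bullet> (U - (kron_act (?G ** K) (t *\<^sub>R l), kron_act M (t *\<^sub>R l)))"
      using H by (metis zero_prod_def)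
    also have "\<dots> = (x \<bullet> p + x2 \<bullet> p2) - (x \<bullet> kron_act (?G ** K) (t *\<^sub>R l) + x2 \<bullet> kron_act M (t *\<^sub>R l))"
      by (simp add: X U inner_diff_right)
    also have "(x \<bullet> kron_act (?G ** K) (t *\<^sub>R l) + x2 \<bullet> kron_act M (t *\<^sub>R l)) = l \<bullet> (t *\<^sub>R l)"
      unfolding l_def by (rule Ladj[OF symK symM])
    finally show "0 \<le> (x \<bullet> p + x2 \<bullet> p2) - t * (l \<bullet> l)" by simp
  qed
  then have "l \<bullet> l = 0" by (rule lin_arg) simp
  then have Lx: "?L x x2 = 0" by (simp add: l_def)
  define d where "d = p - kron_act (?G ** K ** Mi) p2"
  have "\<forall>s. 0 \<le> (x \<bullet> p + x2 \<bullet> p2) - s * (d \<bullet> d)"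
  proof
    fix s
    define y where "y = s *\<^sub>R d"
    define y2 where "y2 = - kron_act (Mi ** K ** ?G) y"
    have "?L y y2 = 0"
      by (simp add: y2_def kron_minus kron_mult[symmetric] matrix_mul_assoc Mi1)
    then have "(0, 0) \<in> tC ?G K M (y, y2)"
      unfolding tC_def normal_cone_zero_def
      by (auto simp: kron_zero image_iff intro!: exI[of _ 0])
    then have "0 \<le> (X - (y, y2)) \<bullet> (U - (0, 0))" using H by blast
    also have "\<dots> = (x \<bullet> p + x2 \<bullet> p2) - (y \<bullet> p + y2 \<bullet> p2)"
      by (simp add: X U inner_diff_left)
    also have "y \<bullet> p + y2 \<bullet> p2 = s * (d \<bullet> d)"
    proof -
      have "y2 \<bullet> p2 = - (y \<bullet> kron_act (?G ** K ** Mi) p2)"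
        by (simp add: y2_def kron_adj matrix_transpose_mul symMi symK transpose_diag matrix_mul_assoc)
      then have "y \<bullet> p + y2 \<bullet> p2 = y \<bullet> d" by (simp add: d_def inner_diff_right)
      then show ?thesis by (simp add: y_def)
    qed
    finally show "0 \<le> (x \<bullet> p + x2 \<bullet> p2) - s * (d \<bullet> d)" .
  qed
  then have "d \<bullet> d = 0" by (rule lin_arg) simp
  then have pd: "p = kron_act (?G ** K) (kron_act Mi p2)" by (simp add: d_def kron_mult)
  have "p2 = kron_act M (kron_act Mi p2)" by (simp add: kron_mult[symmetric] Mi1 kron_mat1)
  then show "U \<in> tC ?G K M X"
    using pd Lx by (simp add: tC_def X U normal_cone_zero_def)
qed



lemma tB_mono:
  fixes B :: "'n::finite \<Rightarrow> 'a::real_inner \<Rightarrow> 'a"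
  assumes mB: "\<forall>i. monotone_fun (B i)"
  shows "monotone_fun (tB B (diag_mat \<gamma>))"
  unfolding monotone_fun_def
proof (intro allI)
  fix X Y :: "('a^'n) \<times> ('a^'n)"
  let ?G = "diag_mat \<gamma>"
  obtain x x2 where X: "X = (x, x2)" by (cases X)
  obtain y y2 where Y: "Y = (y, y2)" by (cases Y)
  have "(X - Y) \<bullet> (tB B ?G X - tB B ?G Y) =
     (x - y) \<bullet> kron_act ?G (prod_fun B (kron_act ?G x) - prod_fun B (kron_act ?G y))"
    by (simp add: X Y tB_def kron_diff)
  also have "\<dots> = (kron_act ?G x - kron_act ?G y) \<bullet> (prod_fun B (kron_act ?G x) - prod_fun B (kron_act ?G y))"
    by (simp only: Gadj kron_diff[symmetric])
  also have "\<dots> = (\<Sum>j\<in>UNIV. (kron_act ?G x $ j - kron_act ?G y $ j) \<bullet> (B j (kron_act ?G x $ j) - B j (kron_act ?G y $ j)))"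
    by (simp add: inner_vec_sum prod_fun_def)
  also have "\<dots> \<ge> 0" using mB by (intro sum_nonneg) (simp add: monotone_fun_def)
  finally show "0 \<le> (X - Y) \<bullet> (tB B ?G X - tB B ?G Y)" .
qed

lemma norm_vec_sq: "(norm (x::'a::real_inner^'n::finite))^2 = (\<Sum>j\<in>UNIV. (norm (x$j))^2)"
  by (simp add: power2_norm_eq_inner inner_vec_sum)

lemma tB_lip:
  fixes B :: "'n::finite \<Rightarrow> 'a::real_inner \<Rightarrow> 'a"
  assumes gpos: "\<forall>i. 0 < \<gamma> i" and lB: "\<forall>i. lipschitz_on (L i) UNIV (B i)"
  shows "lipschitz_on (Max (range (\<lambda>i. (\<gamma> i)\<^sup>2 * L i))) UNIV (tB B (diag_mat \<gamma>))"
proof -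
  define Lm where "Lm = Max (range (\<lambda>i. (\<gamma> i)\<^sup>2 * L i))"
  have Lnn: "0 \<le> L i" for i using lB lipschitz_on_nonneg by blast
  have Lm: "(\<gamma> i)\<^sup>2 * L i \<le> Lm" for i unfolding Lm_def by (rule Max_ge) auto
  have Lm0: "0 \<le> Lm" using Lm[of undefined] Lnn[of undefined]
    by (meson order_trans zero_le_mult_iff zero_le_power2)
  let ?G = "diag_mat \<gamma>"
  have main: "dist (kron_act ?G (prod_fun B (kron_act ?G x))) (kron_act ?G (prod_fun B (kron_act ?G y)))
      \<le> Lm * dist x y" for x y :: "'a^'n"
  proof -
    define D where "D = kron_act ?G (prod_fun B (kron_act ?G x)) - kron_act ?G (prod_fun B (kron_act ?G y))"
    have cj: "norm (D$j) \<le> Lm * norm ((x - y)$j)" for j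
    proof -
      have g: "0 < \<gamma> j" using gpos by blast
      have "norm (D$j) = \<gamma> j * norm (B j (\<gamma> j *\<^sub>R x$j) - B j (\<gamma> j *\<^sub>R y$j))"
        using g by (simp add: D_def kron_diag prod_fun_def scaleR_diff_right[symmetric])
      also have "\<dots> \<le> \<gamma> j * (L j * norm (\<gamma> j *\<^sub>R x$j - \<gamma> j *\<^sub>R y$j))"
        using lipschitz_onD[OF lB[rule_format, of j], of "\<gamma> j *\<^sub>R x$j" "\<gamma> j *\<^sub>R y$j"] g
        by (simp add: dist_norm)
      also have "\<gamma> j *\<^sub>R x$j - \<gamma> j *\<^sub>R y$j = \<gamma> j *\<^sub>R ((x - y)$j)"
        by (simp add: scaleR_diff_right)
      also have "\<gamma> j * (L j * norm (\<gamma> j *\<^sub>R ((x - y)$j))) = \<gamma> j * (L j * (\<gamma> j * norm ((x - y)$j)))"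
        using g by simp
      also have "\<dots> = ((\<gamma> j)\<^sup>2 * L j) * norm ((x - y)$j)"
        by (simp add: power2_eq_square mult_ac)
      also have "\<dots> \<le> Lm * norm ((x - y)$j)"
        using Lm[of j] by (intro mult_right_mono) auto
      finally show ?thesis .
    qed
    have "(norm D)^2 = (\<Sum>j\<in>UNIV. (norm (D$j))^2)" by (rule norm_vec_sq)
    also have "\<dots> \<le> (\<Sum>j\<in>UNIV. (Lm * norm ((x - y)$j))^2)"
      using cj by (intro sum_mono power_mono) auto
    also have "\<dots> = Lm^2 * (norm (x - y))^2"
      by (simp only: power_mult_distrib sum_distrib_left[symmetric] norm_vec_sq[of "x - y"])
    also have "\<dots> = (Lm * norm (x - y))^2" by (simp add: power_mult_distrib)
    finally have sq: "(norm D)^2 \<le> (Lm * norm (x - y))^2" .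
    have "norm D \<le> Lm * norm (x - y)"
      by (rule power2_le_imp_le[OF sq]) (simp add: Lm0)
    then show ?thesis by (simp add: dist_norm D_def)
  qed
  show ?thesis
    unfolding Lm_def[symmetric]
  proof (rule lipschitz_onI)
    fix X Y :: "('a^'n) \<times> ('a^'n)"
    obtain x x2 where X: "X = (x, x2)" by (cases X)
    obtain y y2 where Y: "Y = (y, y2)" by (cases Y)
    have "dist (tB B ?G X) (tB B ?G Y) = dist (kron_act ?G (prod_fun B (kron_act ?G x))) (kron_act ?G (prod_fun B (kron_act ?G y)))"
      by (simp add: X Y tB_def dist_Pair_Pair)
    also have "\<dots> \<le> Lm * dist x y" by (rule main)
    also have "dist x y \<le> dist X Y"
      unfolding X Y dist_Pair_Pair by (rule real_le_rsqrt) simp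
    then have "Lm * dist x y \<le> Lm * dist X Y" using Lm0 by (rule mult_left_mono)
    finally show "dist (tB B ?G X) (tB B ?G Y) \<le> Lm * dist X Y" .
  qed (rule Lm0)
qed


theorem lemma3p3:
  fixes A :: "'n::finite \<Rightarrow> 'a::{real_inner, complete_space} \<Rightarrow> 'a set"
    and B :: "'n \<Rightarrow> 'a \<Rightarrow> 'a"
    and E :: "('n \<times> 'n) set"
    and W K M :: "real^'n^'n"
    and \<gamma> :: "'n \<Rightarrow> real"
    and c :: real
  assumes conn: "connected_graph E"
    and mix: "mixing_matrix E W"
    and gpos: "\<forall>i. 0 < \<gamma> i"
    and K_sqrt: "psd_mat K" "K ** K = (1/2) *\<^sub>R (mat 1 - W)"
    and c_big: "c > onorm (\<lambda>x. (diag_mat \<gamma> ** K ** K ** diag_mat \<gamma>) *v x)"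
    and M_sqrt: "psd_mat M"
      "M ** M = c *\<^sub>R mat 1 - K ** diag_mat \<gamma> ** diag_mat \<gamma> ** K"
    and M_pd: "pd_mat M"
  shows
    "(\<forall>a a2. (0 \<in> sum_op3 (tA A (diag_mat \<gamma>)) (tB B (diag_mat \<gamma>))
                           (tC (diag_mat \<gamma>) K M) (a, a2))
        \<longleftrightarrow> a2 = 0 \<and>
            (\<exists>z. a = (\<chi> i. inverse (\<gamma> i) *\<^sub>R z) \<and>
                 (\<exists>y. (\<forall>i. y i \<in> A i z) \<and> (\<Sum>i\<in>UNIV. y i + B i z) = 0)))
     \<and>
     (\<forall>L :: 'n \<Rightarrow> real.
        (\<forall>i. max_monotone_op (A i)) \<and> (\<forall>i. monotone_fun (B i)) \<and>
        (\<forall>i. lipschitz_on (L i) UNIV (B i))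
        \<longrightarrow> max_monotone_op (tA A (diag_mat \<gamma>)) \<and>
            max_monotone_op (tC (diag_mat \<gamma>) K M :: ('a^'n) \<times> ('a^'n) \<Rightarrow> _) \<and>
            monotone_fun (tB B (diag_mat \<gamma>)) \<and>
            lipschitz_on (Max (range (\<lambda>i. (\<gamma> i)\<^sup>2 * L i))) UNIV (tB B (diag_mat \<gamma>)))"
proof -
  have symK: "transpose K = K" using K_sqrt(1) by (simp add: psd_mat_def sym_mat_def)
  have kerW: "{x. (mat 1 - W) *v x = 0} = {x. \<exists>t::real. x = t *\<^sub>R vec 1}"
    using mix by (simp add: mixing_matrix_def)
  have symM: "transpose M = M" using M_pd by (simp add: pd_mat_def sym_mat_def)
  have "\<forall>x. M *v x = 0 \<longrightarrow> x = 0"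
  proof (intro allI impI)
    fix x :: "real^'n" assume "M *v x = 0"
    then have "x \<bullet> (M *v x) = 0" by simp
    then show "x = 0" using M_pd unfolding pd_mat_def by (metis less_irrefl)
  qed
  then obtain Mi where "Mi ** M = mat 1" using matrix_left_invertible_ker by blast
  then have MiM: "Mi ** M = mat 1" and MMi: "M ** Mi = mat 1"
    using matrix_left_right_inverse by blast+
  have "transpose Mi = Mi"
  proof -
    have "M ** transpose Mi = mat 1"
      using arg_cong[OF MiM, of transpose] by (simp add: matrix_transpose_mul symM)
    then have "Mi ** (M ** transpose Mi) = Mi" by (simp add: matrix_mul_rid)
    then show ?thesis by (simp add: matrix_mul_assoc MiM matrix_mul_lid)
  qed
  note symMi = this
  show ?thesis
  proof (intro conjI allI impI)
    fix a a2
    show "(0 \<in> sum_op3 (tA A (diag_mat \<gamma>)) (tB B (diag_mat \<gamma>))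
                           (tC (diag_mat \<gamma>) K M) (a, a2))
        \<longleftrightarrow> a2 = 0 \<and>
            (\<exists>z. a = (\<chi> i. inverse (\<gamma> i) *\<^sub>R z) \<and>
                 (\<exists>y. (\<forall>i. y i \<in> A i z) \<and> (\<Sum>i\<in>UNIV. y i + B i z) = 0))"
      by (rule part1[OF gpos symK K_sqrt(2) kerW])
  next
    fix L :: "'n \<Rightarrow> real"
    assume h: "(\<forall>i. max_monotone_op (A i)) \<and> (\<forall>i. monotone_fun (B i)) \<and>
        (\<forall>i. lipschitz_on (L i) UNIV (B i))"
    show "max_monotone_op (tA A (diag_mat \<gamma>))" using tA_max[OF gpos] h by blast
    show "max_monotone_op (tC (diag_mat \<gamma>) K M :: ('a^'n) \<times> ('a^'n) \<Rightarrow> _)"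
      by (rule tC_max[OF symK symM MMi symMi])
    show "monotone_fun (tB B (diag_mat \<gamma>))" using tB_mono h by blast
    show "lipschitz_on (Max (range (\<lambda>i. (\<gamma> i)\<^sup>2 * L i))) UNIV (tB B (diag_mat \<gamma>))"
      using tB_lip[OF gpos] h by blast
  qed
qed

end
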